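(* Let $\alpha>1$, $s>0$, $D\ge1$, and restrict to graphs in which every node has out-degree at most $D$. Suppose that for every pair of node-level adjacent datasets $\mathcal{D},\mathcal{D}'$ (both satisfying the degree bound) the DPDGC weights satisfy $D_\alpha((\mathbf{W}^{(A)},\mathbf{b})\,\|\,(\mathbf{W}^{(A)\prime},\mathbf{b}'))\le\gamma_1$, and that the algorithm $\mathcal{B}$ is $(\alpha,\gamma_2)$-Rényi DP with respect to single-row replacement, i.e. $D_\alpha(\mathcal{B}(\mathbf{X},\mathbf{Y},\mathbf{Z})\,\|\,\mathcal{B}(\mathbf{X}',\mathbf{Y}',\mathbf{Z}'))\le\gamma_2$ whenever the inputs differ only in the $r$-th rows of $\mathbf{X}$ and $\mathbf{Z}$ and (if $r\le m$) of $\mathbf{Y}$, for some $r$. Then the DPDGC model is node $(\alpha,\gamma_1+\gamma_2+\frac{2D\alpha}{2s^2})$-GDP: for every $v\in[n]\setminus[m]$ and every pair of node-level adjacent datasets $\mathcal{D},\mathcal{D}'$ with replaced index $r\neq v$, $D_\alpha(\mathcal{M}(v;\mathcal{D})\,\|\,\mathcal{M}(v;\mathcal{D}'))\le\gamma_1+\gamma_2+\frac{2D\alpha}{2s^2}$.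
   Context: A graph dataset is $\mathcal{D}=(\mathbf{X},\mathbf{Y},\mathbf{A})$ with node set $[n]$, $\mathbf{X}\in\mathbb{R}^{n\times F}$, $\mathbf{Y}\in\{0,1\}^{m\times C}$ (one-hot labels of nodes $1,\dots,m$; nodes in $[n]\setminus[m]$ are to be predicted), and $\mathbf{A}\in\{0,1\}^{n\times n}$ the adjacency matrix of a directed graph without self-loops; the out-degree of $r$ is $\sum_i\mathbf{A}_{ir}$. Node-level adjacency: there is $r\in[n]$ such that $\mathcal{D}'$ is obtained from $\mathcal{D}$ by replacing $\mathbf{X}_r$ arbitrarily, $\mathbf{Y}_r$ (if $r\le m$) by an arbitrary one-hot vector, and arbitrarily changing entries of row $r$ and column $r$ of $\mathbf{A}$ (no self-loops), all else unchanged; $r$ is the replaced index. Rényi divergence of order $\alpha>1$: $D_\alpha(X\|Y)=\frac{1}{\alpha-1}\log\mathbb{E}_{x\sim Q}[(P(x)/Q(x))^\alpha]$. DPDGC model: $(\mathbf{W}^{(A)},\mathbf{b})$ is a random output of a randomized algorithm on the dataset, with every row of $\mathbf{W}^{(A)}\in\mathbb{R}^{n\times h}$ of Euclidean norm $1$ and $\mathbf{b}\in\mathbb{R}^h$; $\mathbf{Z}=\mathbf{A}\mathbf{W}^{(A)}+\mathbf{1}_n\mathbf{b}^\top+\mathbf{N}$ with $\mathbf{N}$ having i.i.d. $\mathcal{N}(0,s^2)$ entries independent of everything else; $\Theta=\mathcal{B}(\mathbf{X},\mathbf{Y},\mathbf{Z})$ for a randomized algorithm $\mathcal{B}$ with independent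 internal randomness; $\widehat{\mathbf{Y}}_v=g(\Theta,\mathbf{X}_v,\mathbf{Z}_v)$ for a fixed deterministic $g$; and $\mathcal{M}(v;\mathcal{D})=(\widehat{\mathbf{Y}}_v,(\mathbf{W}^{(A)},\mathbf{b},\Theta))$. *)

theory Defs
  imports "HOL-Probability.Probability"
begin

definition renyi_div :: "real \<Rightarrow> 'a measure \<Rightarrow> 'a measure \<Rightarrow> ereal" where
  "renyi_div \<alpha> P Q =
     (let I = (\<integral>\<^sup>+ x. ennreal (enn2real (RN_deriv Q P x) powr \<alpha>) \<partial>Q)
      in if absolutely_continuous Q P \<and> I < \<infinity>
         then ereal (ln (enn2real I) / (\<alpha> - 1)) else \<infinity>)"

text \<open>Datasets: node set = finite type 'n; X :: n x F feature matrix (rows X $ v);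
  Y v = Some c is the one-hot label (class c) of a labelled node, None for nodes to be
  predicted; A i j = (A_{ij} = 1), directed adjacency matrix.\<close>
type_synonym ('f, 'n, 'c) dataset = "(real^'f^'n) \<times> ('n \<Rightarrow> 'c option) \<times> ('n \<Rightarrow> 'n \<Rightarrow> bool)"

definition labels_wf :: "'n set \<Rightarrow> ('n \<Rightarrow> 'c option) \<Rightarrow> bool" where
  "labels_wf L Y \<longleftrightarrow> (\<forall>v. Y v \<noteq> None \<longleftrightarrow> v \<in> L)"

definition dataset_wf :: "'n::finite set \<Rightarrow> ('f, 'n, 'c) dataset \<Rightarrow> bool" where
  "dataset_wf L D \<longleftrightarrow> (case D of (X, Y, A) \<Rightarrow> labels_wf L Y \<and> (\<forall>i. \<not> A i i))"

definition out_degree :: "('n \<Rightarrow> 'n \<Rightarrow> bool) \<Rightarrow> 'n \<Rightarrow> nat" where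
  "out_degree A r = card {i. A i r}"

definition deg_bounded :: "real \<Rightarrow> ('f, 'n::finite, 'c) dataset \<Rightarrow> bool" where
  "deg_bounded Dg D \<longleftrightarrow> (case D of (X, Y, A) \<Rightarrow> (\<forall>r. real (out_degree A r) \<le> Dg))"

definition node_adjacent :: "'n::finite set \<Rightarrow> ('f, 'n, 'c) dataset \<Rightarrow> ('f, 'n, 'c) dataset \<Rightarrow> 'n \<Rightarrow> bool" where
  "node_adjacent L D D' r \<longleftrightarrow>
     (case D of (X, Y, A) \<Rightarrow> case D' of (X', Y', A') \<Rightarrow>
        dataset_wf L D \<and> dataset_wf L D' \<and>
        (\<forall>i. i \<noteq> r \<longrightarrow> X $ i = X' $ i) \<and>
        (\<forall>i. i \<noteq> r \<longrightarrow> Y i = Y' i) \<and>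
        (\<forall>i j. i \<noteq> r \<and> j \<noteq> r \<longrightarrow> A i j = A' i j))"

definition gauss_noise :: "real \<Rightarrow> (real^'h^'n) measure" where
  "gauss_noise s = density lborel
     (\<lambda>N. \<Prod>i\<in>UNIV. \<Prod>k\<in>UNIV. ennreal (normal_density 0 s (N $ i $ k)))"

definition Zmat :: "('n::finite \<Rightarrow> 'n \<Rightarrow> bool) \<Rightarrow> real^'h^'n \<Rightarrow> real^'h \<Rightarrow> real^'h^'n \<Rightarrow> real^'h^'n" where
  "Zmat A W b N = (\<chi> i. (\<Sum>j\<in>{j. A i j}. W $ j) + b + N $ i)"

text \<open>DPDGC mechanism M(v; D) = (hat Y_v, (W, b, Theta)).  WA: randomized algorithm
  producing (W, b); B: randomized algorithm with parameter space P; g: deterministic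
  prediction map with output space Yo.\<close>
definition dpdgc_mech ::
  "(('f, 'n::finite, 'c) dataset \<Rightarrow> ((real^'h^'n) \<times> (real^'h)) measure) \<Rightarrow> real \<Rightarrow>
   (real^'f^'n \<Rightarrow> ('n \<Rightarrow> 'c option) \<Rightarrow> real^'h^'n \<Rightarrow> 'p measure) \<Rightarrow> 'p measure \<Rightarrow>
   ('p \<Rightarrow> real^'f \<Rightarrow> real^'h \<Rightarrow> 'y) \<Rightarrow> 'y measure \<Rightarrow>
   'n \<Rightarrow> ('f, 'n, 'c) dataset \<Rightarrow> ('y \<times> (((real^'h^'n) \<times> (real^'h)) \<times> 'p)) measure" where
  "dpdgc_mech WA s B P g Yo v D =
     (case D of (X, Y, A) \<Rightarrow>
        WA D \<bind> (\<lambda>(W, b). gauss_noise s \<bind> (\<lambda>N.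
          let Z = Zmat A W b N in
          B X Y Z \<bind> (\<lambda>\<theta>. return (Yo \<Otimes>\<^sub>M (borel \<Otimes>\<^sub>M P))
                                  (g \<theta> (X $ v) (Z $ v), ((W, b), \<theta>))))))"

end

theory Submission imports Defs begin


lemma holder_fin:
  fixes u v :: "'a \<Rightarrow> real" and a b :: real
  assumes M: "finite_measure M" and a: "a > 1" and b: "b > 1" and ab: "1/a + 1/b = 1"
    and [measurable]: "u \<in> borel_measurable M" "v \<in> borel_measurable M"
    and u0: "\<And>x. x \<in> space M \<Longrightarrow> 0 \<le> u x" and v0: "\<And>x. x \<in> space M \<Longrightarrow> 0 \<le> v x"
    and iu: "integrable M (\<lambda>x. u x powr a)" and iv: "integrable M (\<lambda>x. v x powr b)"
    and iuv: "integrable M (\<lambda>x. u x * v x)"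
  shows "(\<integral>x. u x * v x \<partial>M) \<le> (\<integral>x. u x powr a \<partial>M) powr (1/a) * (\<integral>x. v x powr b \<partial>M) powr (1/b)"
proof -
  define A where "A = (\<integral>x. u x powr a \<partial>M)"
  define B where "B = (\<integral>x. v x powr b \<partial>M)"
  have A0: "A \<ge> 0" unfolding A_def by (rule integral_nonneg_AE) simp
  have B0: "B \<ge> 0" unfolding B_def by (rule integral_nonneg_AE) simp
  show ?thesis
  proof (cases "A = 0 \<or> B = 0")
    case True
    then have "AE x in M. u x * v x = 0"
    proof
      assume "A = 0"
      then have "AE x in M. u x powr a = 0"
        using iu unfolding A_def by (subst integral_nonneg_eq_0_iff_AE[symmetric]) auto
      then show ?thesis using AE_space by eventually_elim (use u0 in auto)
    next
      assume "B = 0"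
      then have "AE x in M. v x powr b = 0"
        using iv unfolding B_def by (subst integral_nonneg_eq_0_iff_AE[symmetric]) auto
      then show ?thesis using AE_space by eventually_elim (use v0 in auto)
    qed
    then have "(\<integral>x. u x * v x \<partial>M) = 0" by (simp add: integral_eq_zero_AE)
    then show ?thesis unfolding A_def[symmetric] B_def[symmetric] using A0 B0 by simp
  next
    case False
    then have Ap: "A > 0" and Bp: "B > 0" using A0 B0 by auto
    define A' where "A' = A powr (1/a)"
    define B' where "B' = B powr (1/b)"
    have A'p: "A' > 0" "A' powr a = A" unfolding A'_def using Ap a by (auto simp: powr_powr)
    have B'p: "B' > 0" "B' powr b = B" unfolding B'_def using Bp b by (auto simp: powr_powr)
    have pt: "u x * v x / (A' * B') \<le> u x powr a / (a * A) + v x powr b / (b * B)" if xs: "x \<in> space M" for x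
    proof -
      have "(u x / A') * (v x / B') \<le> (u x / A') powr a / a + (v x / B') powr b / b"
        using Youngs_inequality[OF a b ab, of "u x / A'" "v x / B'"] u0[OF xs] v0[OF xs] A'p B'p by simp
      also have "(u x / A') powr a = u x powr a / A"
        using A'p u0[OF xs] by (simp add: powr_divide)
      also have "(v x / B') powr b = v x powr b / B"
        using B'p v0[OF xs] by (simp add: powr_divide)
      finally show ?thesis by (simp add: field_simps)
    qed
    have "(\<integral>x. u x * v x / (A' * B') \<partial>M) \<le> (\<integral>x. u x powr a / (a * A) + v x powr b / (b * B) \<partial>M)"
      using pt iu iv iuv by (intro integral_mono) auto
    also have "\<dots> = A / (a * A) + B / (b * B)"
      using iu iv unfolding A_def B_def by simp
    also have "\<dots> = 1" using Ap Bp ab a b by (simp add: field_simps)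
    finally have "(\<integral>x. u x * v x \<partial>M) / (A' * B') \<le> 1" by simp
    then show ?thesis using A'p B'p unfolding A_def[symmetric] B_def[symmetric] A'_def B'_def
      by (simp add: divide_le_eq mult.commute)
  qed
qed



definition bnd :: "real \<Rightarrow> 'a measure \<Rightarrow> 'a measure \<Rightarrow> real \<Rightarrow> bool" where
  "bnd \<alpha> P Q c \<longleftrightarrow> (\<forall>f::'a\<Rightarrow>real. f \<in> borel_measurable P \<longrightarrow> (\<forall>x\<in>space P. 0 \<le> f x) \<longrightarrow>
     (\<exists>B. \<forall>x\<in>space P. f x \<le> B) \<longrightarrow>
     (\<integral>x. f x \<partial>P) \<le> c * (\<integral>x. f x powr (\<alpha>/(\<alpha>-1)) \<partial>Q) powr ((\<alpha>-1)/\<alpha>))"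

lemma bnd_mono: "bnd \<alpha> P Q c \<Longrightarrow> c \<le> d \<Longrightarrow> bnd \<alpha> P Q d"
  unfolding bnd_def
  by (smt (verit, best) mult_right_mono powr_ge_zero)

lemma integrable_bounded_nonneg:
  fixes f :: "'a \<Rightarrow> real"
  assumes "finite_measure M" "f \<in> borel_measurable M" "\<And>x. x \<in> space M \<Longrightarrow> 0 \<le> f x"
    "\<And>x. x \<in> space M \<Longrightarrow> f x \<le> B"
  shows "integrable M f"
  using assms by (intro finite_measure.integrable_const_bound[where B=B]) (auto intro!: AE_I2)

lemma bnd_density:
  fixes q :: "'a \<Rightarrow> real"
  assumes a: "\<alpha> > 1" and Q: "prob_space Q" and q[measurable]: "q \<in> borel_measurable Q"
    and q0: "\<And>x. 0 \<le> q x" and P: "P = density Q (\<lambda>x. ennreal (q x))"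
    and iq: "integrable Q (\<lambda>x. q x powr \<alpha>)"
  shows "bnd \<alpha> P Q ((\<integral>x. q x powr \<alpha> \<partial>Q) powr (1/\<alpha>))"
  unfolding bnd_def
proof (intro allI impI)
  fix f :: "'a \<Rightarrow> real"
  assume fm: "f \<in> borel_measurable P" and f0: "\<forall>x\<in>space P. 0 \<le> f x" and "\<exists>B. \<forall>x\<in>space P. f x \<le> B"
  then obtain B where fB: "\<forall>x\<in>space P. f x \<le> B" by blast
  have sp: "space P = space Q" "sets P = sets Q" using P by auto
  have fmQ[measurable]: "f \<in> borel_measurable Q" using fm sp by (simp add: measurable_def)
  interpret Q: prob_space Q by fact
  have fin: "finite_measure Q" by unfold_locales
  define \<beta> where "\<beta> = \<alpha>/(\<alpha>-1)"
  have b: "\<beta> > 1" using a unfolding \<beta>_def by (simp add: field_simps)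
  have ab: "1/\<beta> + 1/\<alpha> = 1" using a unfolding \<beta>_def by (simp add: field_simps)
  have ib: "integrable Q (\<lambda>x. f x powr \<beta>)"
    using f0 fB sp b by (intro integrable_bounded_nonneg[OF fin, where B="B powr \<beta>"]) (auto intro!: powr_mono2)
  have iqq: "integrable Q (\<lambda>x. B * (1 + q x powr \<alpha>))"
    using iq by auto
  have iqf: "integrable Q (\<lambda>x. f x * q x)"
  proof (rule Bochner_Integration.integrable_bound[OF iqq])
    show "(\<lambda>x. f x * q x) \<in> borel_measurable Q" by measurable
    have "norm (f x * q x) \<le> norm (B * (1 + q x powr \<alpha>))" if x: "x \<in> space Q" for x
    proof -
      have B0: "0 \<le> B" using f0 fB x sp by force
      have "q x \<le> 1 + q x powr \<alpha>"
      proof (cases "q x \<le> 1")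
        case True then show ?thesis using powr_ge_zero[of "q x" \<alpha>] by linarith
      next
        case False
        then have "q x powr 1 \<le> q x powr \<alpha>" using a by (intro powr_mono) auto
        then show ?thesis using False by simp
      qed
      then have "f x * q x \<le> B * (1 + q x powr \<alpha>)"
        using f0 fB x sp q0[of x] B0 by (intro mult_mono) auto
      moreover have "0 \<le> f x * q x" using f0 x sp q0[of x] by auto
      ultimately show ?thesis by simp
    qed
    then show "AE x in Q. norm (f x * q x) \<le> norm (B * (1 + q x powr \<alpha>))" by (intro AE_I2)
  qed
  have "(\<integral>x. f x \<partial>P) = (\<integral>x. q x * f x \<partial>Q)"
    unfolding P by (subst integral_density) (auto simp: q0)
  also have "\<dots> = (\<integral>x. f x * q x \<partial>Q)" by (simp add: mult.commute)
  also have "\<dots> \<le> (\<integral>x. f x powr \<beta> \<partial>Q) powr (1/\<beta>) * (\<integral>x. q x powr \<alpha> \<partial>Q) powr (1/\<alpha>)"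
    using holder_fin[OF fin b a ab, of f q] f0 sp q0 ib iq iqf by auto
  also have "1/\<beta> = (\<alpha>-1)/\<alpha>" unfolding \<beta>_def by simp
  finally show "(\<integral>x. f x \<partial>P) \<le> (\<integral>x. q x powr \<alpha> \<partial>Q) powr (1/\<alpha>) * (\<integral>x. f x powr (\<alpha>/(\<alpha>-1)) \<partial>Q) powr ((\<alpha>-1)/\<alpha>)"
    unfolding \<beta>_def by (simp add: mult.commute)
qed



lemma density_RN_real:
  assumes Q: "prob_space Q" and P: "prob_space P" and ac: "absolutely_continuous Q P" and s: "sets P = sets Q"
  shows "P = density Q (\<lambda>x. ennreal (enn2real (RN_deriv Q P x)))"
proof -
  interpret Q: prob_space Q by fact
  interpret P: prob_space P by fact
  have "AE x in Q. RN_deriv Q P x \<noteq> \<infinity>"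
    by (rule Q.RN_deriv_finite[OF _ ac s]) unfold_locales
  then have "density Q (RN_deriv Q P) = density Q (\<lambda>x. ennreal (enn2real (RN_deriv Q P x)))"
    by (intro density_cong) (auto elim!: eventually_mono simp: ennreal_enn2real_if)
  then show ?thesis using Q.density_RN_deriv[OF ac s] by simp
qed

lemma bnd_of_renyi:
  assumes a: "\<alpha> > 1" and P: "prob_space P" and Q: "prob_space Q" and s: "sets P = sets Q"
    and r: "renyi_div \<alpha> P Q \<le> ereal \<gamma>"
  shows "bnd \<alpha> P Q (exp (\<gamma> * (\<alpha>-1) / \<alpha>))"
proof -
  define q where "q x = enn2real (RN_deriv Q P x)" for x
  define I where "I = (\<integral>\<^sup>+ x. ennreal (q x powr \<alpha>) \<partial>Q)"
  have cond: "absolutely_continuous Q P \<and> I < \<infinity>"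
  proof (rule ccontr)
    assume "\<not> ?thesis"
    then have "renyi_div \<alpha> P Q = \<infinity>" unfolding renyi_div_def q_def I_def Let_def by auto
    then show False using r by simp
  qed
  then have rv: "renyi_div \<alpha> P Q = ereal (ln (enn2real I) / (\<alpha> - 1))"
    unfolding renyi_div_def q_def I_def Let_def by auto
  have dens: "P = density Q (\<lambda>x. ennreal (q x))"
    unfolding q_def using density_RN_real[OF Q P _ s] cond by auto
  have qm[measurable]: "q \<in> borel_measurable Q" unfolding q_def by measurable
  have iq: "integrable Q (\<lambda>x. q x powr \<alpha>)"
    using cond unfolding I_def by (intro integrableI_nonneg) auto
  have intI: "(\<integral>x. q x powr \<alpha> \<partial>Q) = enn2real I"
    unfolding I_def by (subst integral_eq_nn_integral) auto
  have b: "bnd \<alpha> P Q ((enn2real I) powr (1/\<alpha>))"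
    using bnd_density[OF a Q qm _ dens iq] intI unfolding q_def by simp
  have lnI: "ln (enn2real I) \<le> \<gamma> * (\<alpha> - 1)"
    using r rv a by (simp add: divide_le_eq)
  have "(enn2real I) powr (1/\<alpha>) \<le> exp (\<gamma> * (\<alpha>-1) / \<alpha>)"
  proof (cases "enn2real I = 0")
    case True then show ?thesis by simp
  next
    case False
    then have pos: "enn2real I > 0" by (simp add: enn2real_nonneg order_less_le)
    have "(enn2real I) powr (1/\<alpha>) = exp (ln (enn2real I) / \<alpha>)"
      using pos by (simp add: powr_def)
    also have "\<dots> \<le> exp (\<gamma> * (\<alpha>-1) / \<alpha>)"
      using lnI a by (simp add: divide_right_mono)
    finally show ?thesis .
  qed
  then show ?thesis using bnd_mono b by blast
qed



lemma renyi_of_bnd: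
  assumes a: "\<alpha> > 1" and P: "prob_space P" and Q: "prob_space Q" and s: "sets P = sets Q"
    and b: "bnd \<alpha> P Q c" and c: "c > 0"
  shows "renyi_div \<alpha> P Q \<le> ereal (\<alpha> * ln c / (\<alpha>-1))"
proof -
  interpret P: prob_space P by fact
  interpret Q: prob_space Q by fact
  have sp: "space P = space Q" using s sets_eq_imp_space_eq by blast
  define \<beta> where "\<beta> = \<alpha>/(\<alpha>-1)"
  have bpos: "\<beta> > 0" using a unfolding \<beta>_def by simp
  have e0: "(\<alpha>-1)/\<alpha> > 0" using a by simp
  have bb: "(\<integral>x. f x \<partial>P) \<le> c * (\<integral>x. f x powr \<beta> \<partial>Q) powr ((\<alpha>-1)/\<alpha>)"
    if "f \<in> borel_measurable Q" "\<forall>x\<in>space Q. 0 \<le> f x" "\<forall>x\<in>space Q. f x \<le> Bd" for f Bd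
    using b that unfolding bnd_def \<beta>_def using sp s measurable_cong_sets by (metis (no_types, lifting))
  have ac: "absolutely_continuous Q P"
    unfolding absolutely_continuous_def
  proof
    fix A assume A: "A \<in> null_sets Q"
    then have As: "A \<in> sets Q" and A0: "emeasure Q A = 0" by auto
    have "(\<integral>x. indicator A x \<partial>P) \<le> c * (\<integral>x. (indicator A x :: real) powr \<beta> \<partial>Q) powr ((\<alpha>-1)/\<alpha>)"
      by (rule bb[of _ 1]) (use As in auto)
    also have "(\<lambda>x. (indicator A x :: real) powr \<beta>) = indicator A"
      by (auto simp: indicator_def)
    also have "(\<integral>x. (indicator A x::real) \<partial>Q) = 0" using As A0 by (simp add: Q.emeasure_eq_measure Int_absorb2 sets.sets_into_space)
    finally have "measure P A \<le> 0" using As s e0 by simp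
    then have "measure P A = 0" by (simp add: measure_le_0_iff)
    then show "A \<in> null_sets P" using As s by (simp add: P.emeasure_eq_measure null_sets_def)
  qed
  define q where "q x = enn2real (RN_deriv Q P x)" for x
  have qm[measurable]: "q \<in> borel_measurable Q" unfolding q_def by measurable
  have q0: "\<And>x. 0 \<le> q x" unfolding q_def by simp
  have dens: "P = density Q (\<lambda>x. ennreal (q x))"
    unfolding q_def using density_RN_real[OF Q P ac s] by simp
  have nnq: "(\<integral>\<^sup>+x. ennreal (q x) \<partial>Q) = 1"
  proof -
    have "1 = emeasure (density Q (\<lambda>x. ennreal (q x))) (space Q)"
      using P.emeasure_space_1 dens sp by metis
    also have "\<dots> = (\<integral>\<^sup>+x. ennreal (q x) \<partial>Q)"
      by (subst emeasure_density) (auto intro!: nn_integral_cong)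
    finally show ?thesis by simp
  qed
  have iq: "integrable Q q" using nnq by (intro integrableI_nonneg) (auto simp: q0)
  define qn where "qn n x = min (q x) (real n)" for n x
  have qnm[measurable]: "qn n \<in> borel_measurable Q" for n unfolding qn_def by measurable
  have qn0: "0 \<le> qn n x" for n x unfolding qn_def using q0 by simp
  define H where "H n = (\<integral>x. qn n x powr \<alpha> \<partial>Q)" for n
  have iH: "integrable Q (\<lambda>x. qn n x powr \<alpha>)" for n
    by (rule integrable_bounded_nonneg[where B="real n powr \<alpha>"]) (use a in \<open>auto intro!: powr_mono2 simp: qn_def q0 Q.finite_measure_axioms\<close>)
  have H0: "0 \<le> H n" for n unfolding H_def by (rule integral_nonneg_AE) simp
  have Hle: "H n \<le> c powr \<alpha>" for n
  proof -
    define f where "f x = qn n x powr (\<alpha>-1)" for x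
    have ab: "(\<alpha>-1) * \<beta> = \<alpha>" unfolding \<beta>_def using a by simp
    have fm[measurable]: "f \<in> borel_measurable Q" unfolding f_def by measurable
    have "(\<integral>x. f x \<partial>P) \<le> c * (\<integral>x. f x powr \<beta> \<partial>Q) powr ((\<alpha>-1)/\<alpha>)"
    proof (rule bb[of f "real n powr (\<alpha>-1)"])
      show "f \<in> borel_measurable Q" by (rule fm)
      show "\<forall>x\<in>space Q. 0 \<le> f x" by (simp add: f_def)
      have "f x \<le> real n powr (\<alpha>-1)" for x
        unfolding f_def qn_def using a q0[of x] by (intro powr_mono2) auto
      then show "\<forall>x\<in>space Q. f x \<le> real n powr (\<alpha>-1)" by blast
    qed
    also have "(\<lambda>x. f x powr \<beta>) = (\<lambda>x. qn n x powr \<alpha>)"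
      unfolding f_def using ab by (simp add: powr_powr)
    finally have 1: "(\<integral>x. f x \<partial>P) \<le> c * H n powr ((\<alpha>-1)/\<alpha>)" unfolding H_def .
    have "(\<integral>x. f x \<partial>P) = (\<integral>x. q x * f x \<partial>Q)"
      unfolding dens by (subst integral_density) (auto simp: q0)
    have ifq: "integrable Q (\<lambda>x. q x * f x)"
    proof (rule Bochner_Integration.integrable_bound[where f="\<lambda>x. q x * real n powr (\<alpha>-1)"])
      show "integrable Q (\<lambda>x. q x * real n powr (\<alpha>-1))" using iq by simp
      show "(\<lambda>x. q x * f x) \<in> borel_measurable Q" by measurable
      show "AE x in Q. norm (q x * f x) \<le> norm (q x * real n powr (\<alpha>-1))"
        using a by (intro AE_I2) (auto simp: f_def q0 qn0 qn_def intro!: mult_left_mono powr_mono2)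
    qed
    have "H n \<le> (\<integral>x. q x * f x \<partial>Q)" unfolding H_def
    proof (rule integral_mono[OF iH ifq])
      fix x
      have "qn n x powr \<alpha> = qn n x * qn n x powr (\<alpha>-1)"
      proof (cases "qn n x = 0")
        case True then show ?thesis using a by simp
      next
        case False then show ?thesis using qn0[of n x] by (simp add: powr_diff)
      qed
      also have "\<dots> \<le> q x * f x" unfolding f_def
        by (rule mult_right_mono) (auto simp: qn_def)
      finally show "qn n x powr \<alpha> \<le> q x * f x" .
    qed
    also have "\<dots> = (\<integral>x. f x \<partial>P)"
      unfolding dens by (subst integral_density) (auto simp: q0)
    finally have 2: "H n \<le> c * H n powr ((\<alpha>-1)/\<alpha>)" using 1 by linarith
    show ?thesis
    proof (cases "H n = 0")
      case True then show ?thesis by simp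
    next
      case False
      then have Hp: "H n > 0" using H0[of n] by simp
      have "H n = H n powr (1/\<alpha>) * H n powr ((\<alpha>-1)/\<alpha>)"
        using Hp a by (simp add: powr_add[symmetric] add_divide_distrib[symmetric])
      with 2 have "H n powr (1/\<alpha>) * H n powr ((\<alpha>-1)/\<alpha>) \<le> c * H n powr ((\<alpha>-1)/\<alpha>)" by simp
      then have 3: "H n powr (1/\<alpha>) \<le> c" using Hp by (simp add: mult_le_cancel_right)
      have "H n = (H n powr (1/\<alpha>)) powr \<alpha>" using Hp a by (simp add: powr_powr)
      also have "\<dots> \<le> c powr \<alpha>" using 3 a by (intro powr_mono2) auto
      finally show ?thesis .
    qed
  qed
  define I where "I = (\<integral>\<^sup>+ x. ennreal (q x powr \<alpha>) \<partial>Q)"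
  have sup: "ennreal (q x powr \<alpha>) = (SUP n. ennreal (qn n x powr \<alpha>))" for x
  proof (rule antisym)
    obtain n :: nat where "q x \<le> real n" using real_arch_simple by blast
    then have "ennreal (q x powr \<alpha>) = ennreal (qn n x powr \<alpha>)" by (simp add: qn_def)
    then show "ennreal (q x powr \<alpha>) \<le> (SUP n. ennreal (qn n x powr \<alpha>))"
      by (metis SUP_upper UNIV_I)
    have "ennreal (qn n x powr \<alpha>) \<le> ennreal (q x powr \<alpha>)" for n
    proof (rule ennreal_leI, rule powr_mono2)
      show "0 \<le> \<alpha>" using a by simp
      show "0 \<le> qn n x" by (rule qn0)
      show "qn n x \<le> q x" unfolding qn_def by simp
    qed
    then show "(SUP n. ennreal (qn n x powr \<alpha>)) \<le> ennreal (q x powr \<alpha>)"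
      by (rule SUP_least)
  qed
  have inc: "incseq (\<lambda>n x. ennreal (qn n x powr \<alpha>))"
    unfolding incseq_def le_fun_def
  proof (intro allI impI)
    fix m n :: nat and x assume mn: "m \<le> n"
    show "ennreal (qn m x powr \<alpha>) \<le> ennreal (qn n x powr \<alpha>)"
    proof (rule ennreal_leI, rule powr_mono2)
      show "0 \<le> \<alpha>" using a by simp
      show "0 \<le> qn m x" by (rule qn0)
      show "qn m x \<le> qn n x" unfolding qn_def using mn by (simp add: min.coboundedI1 min.coboundedI2)
    qed
  qed
  have "I = (SUP n. \<integral>\<^sup>+ x. ennreal (qn n x powr \<alpha>) \<partial>Q)"
    unfolding I_def sup
  proof (rule nn_integral_monotone_convergence_SUP[OF inc])
    fix i show "(\<lambda>x. ennreal (qn i x powr \<alpha>)) \<in> borel_measurable Q" by simp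
  qed
  also have "\<dots> = (SUP n. ennreal (H n))"
    unfolding H_def using iH by (simp add: nn_integral_eq_integral)
  also have "\<dots> \<le> ennreal (c powr \<alpha>)"
    by (intro SUP_least ennreal_leI Hle)
  finally have Ile: "I \<le> ennreal (c powr \<alpha>)" .
  have Ifin: "I < \<infinity>" using le_less_trans[OF Ile ennreal_less_top] by (simp add: infinity_ennreal_def)
  have Ipos: "enn2real I > 0"
  proof (rule ccontr)
    assume "\<not> ?thesis"
    then have "enn2real I = 0" using enn2real_nonneg[of I] by linarith
    then have "I = 0" using Ifin by (auto simp: enn2real_eq_0_iff)
    then have "AE x in Q. ennreal (q x powr \<alpha>) = 0" unfolding I_def
      by (subst (asm) nn_integral_0_iff_AE) auto
    then have "AE x in Q. ennreal (q x) = 0"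
    proof (rule eventually_mono)
      fix x assume "ennreal (q x powr \<alpha>) = 0"
      then have "q x powr \<alpha> = 0" using q0[of x] by (simp add: ennreal_eq_0_iff)
      then show "ennreal (q x) = 0" by simp
    qed
    then have "(\<integral>\<^sup>+x. ennreal (q x) \<partial>Q) = 0" by (simp add: nn_integral_0_iff_AE)
    then show False using nnq by simp
  qed
  have rv: "renyi_div \<alpha> P Q = ereal (ln (enn2real I) / (\<alpha> - 1))"
    unfolding renyi_div_def q_def[symmetric] I_def[symmetric] Let_def using ac Ifin by auto
  have "enn2real I \<le> c powr \<alpha>" using Ile Ifin by (simp add: enn2real_leI)
  then have "ln (enn2real I) \<le> ln (c powr \<alpha>)" using Ipos c by (subst ln_le_cancel_iff) auto
  also have "\<dots> = \<alpha> * ln c" using c by (simp add: ln_powr)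
  finally show ?thesis unfolding rv using a by (simp add: divide_right_mono)
qed



lemma kernel_facts:
  assumes K: "K \<in> M \<rightarrow>\<^sub>M prob_algebra N" and x: "x \<in> space M"
  shows "prob_space (K x)" "sets (K x) = sets N" "space (K x) = space N"
proof -
  have "sets (K x) = sets N \<and> prob_space (K x)" using measurable_space[OF K x] by (simp add: space_prob_algebra)
  then show "prob_space (K x)" "sets (K x) = sets N" "space (K x) = space N"
    using sets_eq_imp_space_eq by auto
qed

lemma integral_bind_bounded:
  fixes f :: "'b \<Rightarrow> real"
  assumes K: "K \<in> M \<rightarrow>\<^sub>M prob_algebra N" and P: "prob_space P" and sP: "sets P = sets M"
    and f[measurable]: "f \<in> borel_measurable N"
    and f0: "\<And>y. y \<in> space N \<Longrightarrow> 0 \<le> f y" and fB: "\<And>y. y \<in> space N \<Longrightarrow> f y \<le> B"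
  shows "(\<integral>y. f y \<partial>(P \<bind> K)) = (\<integral>x. (\<integral>y. f y \<partial>K x) \<partial>P)"
proof -
  interpret P: prob_space P by fact
  have Ks: "K \<in> M \<rightarrow>\<^sub>M subprob_algebra N" using K by (rule measurable_prob_algebraD)
  have Ps: "K \<in> P \<rightarrow>\<^sub>M subprob_algebra N" using Ks sP by (simp add: measurable_def sets_eq_imp_space_eq[OF sP])
  have spP: "space P = space M" using sP by (rule sets_eq_imp_space_eq)
  have ne: "space P \<noteq> {}" by (rule P.not_empty)
  have sb: "sets (P \<bind> K) = sets N" using kernel_facts[OF K] spP ne by (intro sets_bind) auto
  have gm[measurable]: "(\<lambda>x. \<integral>y. f y \<partial>K x) \<in> borel_measurable P"
    using measurable_compose[OF Ps integral_measurable_subprob_algebra[OF f]] .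
  have ginn: "(\<integral>\<^sup>+y. ennreal (f y) \<partial>K x) = ennreal (\<integral>y. f y \<partial>K x)" if x: "x \<in> space P" for x
  proof -
    have x': "x \<in> space M" using x spP by simp
    interpret Kx: prob_space "K x" using kernel_facts(1)[OF K x'] .
    have fK: "f \<in> borel_measurable (K x)" using kernel_facts(2)[OF K x'] f by (simp add: measurable_def kernel_facts(3)[OF K x'])
    have "integrable (K x) f"
      by (rule integrable_bounded_nonneg[where B=B]) (use fK f0 fB kernel_facts(3)[OF K x'] Kx.finite_measure_axioms in auto)
    then show ?thesis using f0 kernel_facts(3)[OF K x'] by (intro nn_integral_eq_integral) auto
  qed
  have g0: "0 \<le> (\<integral>y. f y \<partial>K x)" if x: "x \<in> space P" for x
    using f0 kernel_facts(3)[OF K] x spP by (intro integral_nonneg_AE AE_I2) auto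
  have gB: "(\<integral>y. f y \<partial>K x) \<le> B" if x: "x \<in> space P" for x
  proof -
    have x': "x \<in> space M" using x spP by simp
    interpret Kx: prob_space "K x" using kernel_facts(1)[OF K x'] .
    have fK: "f \<in> borel_measurable (K x)" using kernel_facts(2)[OF K x'] f by (simp add: measurable_def kernel_facts(3)[OF K x'])
    have "integrable (K x) f"
      by (rule integrable_bounded_nonneg[where B=B]) (use fK f0 fB kernel_facts(3)[OF K x'] Kx.finite_measure_axioms in auto)
    then have "(\<integral>y. f y \<partial>K x) \<le> (\<integral>y. B \<partial>K x)"
      using fB kernel_facts(3)[OF K x'] by (intro integral_mono) auto
    then show ?thesis by (simp add: Kx.prob_space)
  qed
  have fb: "f \<in> borel_measurable (P \<bind> K)" using sb by (simp add: measurable_def sets_eq_imp_space_eq[OF sb])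
  have "(\<integral>y. f y \<partial>(P \<bind> K)) = enn2real (\<integral>\<^sup>+y. ennreal (f y) \<partial>(P \<bind> K))"
    using f0 sets_eq_imp_space_eq[OF sb] by (intro integral_eq_nn_integral fb AE_I2) auto
  also have "(\<integral>\<^sup>+y. ennreal (f y) \<partial>(P \<bind> K)) = (\<integral>\<^sup>+x. \<integral>\<^sup>+y. ennreal (f y) \<partial>K x \<partial>P)"
    by (rule nn_integral_bind[OF _ Ps]) measurable
  also have "\<dots> = (\<integral>\<^sup>+x. ennreal (\<integral>y. f y \<partial>K x) \<partial>P)"
    by (rule nn_integral_cong) (simp add: ginn)
  also have "enn2real \<dots> = (\<integral>x. (\<integral>y. f y \<partial>K x) \<partial>P)"
    using g0 by (subst integral_eq_nn_integral) (auto intro!: AE_I2)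
  finally show ?thesis .
qed



lemma bnd_bind:
  assumes a: "\<alpha> > 1" and P: "prob_space P" and Q: "prob_space Q"
    and sP: "sets P = sets M" and sQ: "sets Q = sets M"
    and K: "K \<in> M \<rightarrow>\<^sub>M prob_algebra N" and K': "K' \<in> M \<rightarrow>\<^sub>M prob_algebra N"
    and b1: "bnd \<alpha> P Q c1" and b2: "AE x in P. bnd \<alpha> (K x) (K' x) c2"
    and c1: "c1 \<ge> 0" and c2: "c2 \<ge> 0"
  shows "bnd \<alpha> (P \<bind> K) (Q \<bind> K') (c1 * c2)"
  unfolding bnd_def
proof (intro allI impI)
  interpret P: prob_space P by fact
  interpret Q: prob_space Q by fact
  fix f :: "_ \<Rightarrow> real"
  assume fm': "f \<in> borel_measurable (P \<bind> K)" and f0': "\<forall>x\<in>space (P \<bind> K). 0 \<le> f x"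
    and "\<exists>B. \<forall>x\<in>space (P \<bind> K). f x \<le> B"
  then obtain B where fB': "\<forall>x\<in>space (P \<bind> K). f x \<le> B" by blast
  have spP: "space P = space M" using sP by (rule sets_eq_imp_space_eq)
  have spQ: "space Q = space M" using sQ by (rule sets_eq_imp_space_eq)
  have sb: "sets (P \<bind> K) = sets N" using kernel_facts[OF K] spP P.not_empty by (intro sets_bind) auto
  have sbspace: "space (P \<bind> K) = space N" using sb by (rule sets_eq_imp_space_eq)
  have f[measurable]: "f \<in> borel_measurable N" using fm' sb by (simp add: measurable_def sbspace)
  have f0: "\<And>y. y \<in> space N \<Longrightarrow> 0 \<le> f y" using f0' sbspace by auto
  have fB: "\<And>y. y \<in> space N \<Longrightarrow> f y \<le> B" using fB' sbspace by auto
  define \<beta> where "\<beta> = \<alpha>/(\<alpha>-1)"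
  define e where "e = (\<alpha>-1)/\<alpha>"
  have eb: "e * \<beta> = 1" unfolding e_def \<beta>_def using a by simp
  have e0: "e > 0" unfolding e_def using a by simp
  have b0: "\<beta> > 0" unfolding \<beta>_def using a by simp
  have fbm[measurable]: "(\<lambda>y. f y powr \<beta>) \<in> borel_measurable N" by measurable
  define g where "g x = (\<integral>y. f y \<partial>K x)" for x
  define h where "h x = (\<integral>y. f y powr \<beta> \<partial>K' x)" for x
  have K's: "K' \<in> M \<rightarrow>\<^sub>M subprob_algebra N" using K' by (rule measurable_prob_algebraD)
  have hm[measurable]: "h \<in> borel_measurable M"
    unfolding h_def using measurable_compose[OF K's integral_measurable_subprob_algebra[OF fbm]] .
  have h0: "0 \<le> h x" if "x \<in> space M" for x
    unfolding h_def using kernel_facts(3)[OF K' that] by (intro integral_nonneg_AE AE_I2) auto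
  have hB: "h x \<le> B powr \<beta>" if x: "x \<in> space M" for x
  proof -
    interpret Kx: prob_space "K' x" using kernel_facts(1)[OF K' x] .
    have fK: "(\<lambda>y. f y powr \<beta>) \<in> borel_measurable (K' x)"
      using kernel_facts(2)[OF K' x] fbm by (simp add: measurable_def kernel_facts(3)[OF K' x])
    have fyB: "f y powr \<beta> \<le> B powr \<beta>" if "y \<in> space N" for y
      using f0[OF that] fB[OF that] b0 by (intro powr_mono2) auto
    have "integrable (K' x) (\<lambda>y. f y powr \<beta>)"
      by (rule integrable_bounded_nonneg[where B="B powr \<beta>"]) (use fK fyB kernel_facts(3)[OF K' x] Kx.finite_measure_axioms in auto)
    then have "h x \<le> (\<integral>y. B powr \<beta> \<partial>K' x)"
      unfolding h_def using fyB kernel_facts(3)[OF K' x] by (intro integral_mono) auto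
    then show ?thesis by (simp add: Kx.prob_space)
  qed
  have "(\<integral>y. f y \<partial>(P \<bind> K)) = (\<integral>x. g x \<partial>P)"
    unfolding g_def by (rule integral_bind_bounded[OF K P sP f f0 fB])
  also have "\<dots> \<le> (\<integral>x. c2 * h x powr e \<partial>P)"
  proof (rule integral_mono_AE)
    show "integrable P g"
    proof (rule integrable_bounded_nonneg[where B=B])
      show "finite_measure P" by unfold_locales
      have Ks: "K \<in> M \<rightarrow>\<^sub>M subprob_algebra N" using K by (rule measurable_prob_algebraD)
      show "g \<in> borel_measurable P" unfolding g_def
        using measurable_compose[OF Ks integral_measurable_subprob_algebra[OF f]] sP
        by (simp add: measurable_def spP)
      fix x assume x: "x \<in> space P"
      then have x': "x \<in> space M" using spP by simp
      interpret Kx: prob_space "K x" using kernel_facts(1)[OF K x'] .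
      have fK: "f \<in> borel_measurable (K x)" using kernel_facts(2)[OF K x'] f by (simp add: measurable_def kernel_facts(3)[OF K x'])
      have "integrable (K x) f"
        by (rule integrable_bounded_nonneg[where B=B]) (use fK f0 fB kernel_facts(3)[OF K x'] Kx.finite_measure_axioms in auto)
      then have "g x \<le> (\<integral>y. B \<partial>K x)"
        unfolding g_def using fB kernel_facts(3)[OF K x'] by (intro integral_mono) auto
      then show "g x \<le> B" by (simp add: Kx.prob_space)
      show "0 \<le> g x" unfolding g_def using f0 kernel_facts(3)[OF K x'] by (intro integral_nonneg_AE AE_I2) auto
    qed
    show "integrable P (\<lambda>x. c2 * h x powr e)"
    proof (rule integrable_bounded_nonneg[where B="c2 * (B powr \<beta>) powr e"])
      show "finite_measure P" by unfold_locales
      show "(\<lambda>x. c2 * h x powr e) \<in> borel_measurable P" using sP by (simp add: measurable_def spP)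
      fix x assume x: "x \<in> space P"
      then have x': "x \<in> space M" using spP by simp
      show "0 \<le> c2 * h x powr e" using c2 by simp
      show "c2 * h x powr e \<le> c2 * (B powr \<beta>) powr e"
        using c2 h0[OF x'] hB[OF x'] e0 by (intro mult_left_mono powr_mono2) auto
    qed
    show "AE x in P. g x \<le> c2 * h x powr e"
      using b2 AE_space
    proof eventually_elim
      case (elim x)
      then have x': "x \<in> space M" using spP by simp
      have fK: "f \<in> borel_measurable (K x)" using kernel_facts(2)[OF K x'] f by (simp add: measurable_def kernel_facts(3)[OF K x'])
      show ?case using elim(1) unfolding bnd_def g_def h_def e_def \<beta>_def
        using fK f0 fB kernel_facts(3)[OF K x'] by blast
    qed
  qed
  also have "\<dots> = c2 * (\<integral>x. h x powr e \<partial>P)" by simp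
  also have "(\<integral>x. h x powr e \<partial>P) \<le> c1 * (\<integral>x. (h x powr e) powr \<beta> \<partial>Q) powr e"
  proof -
    have "(\<lambda>x. h x powr e) \<in> borel_measurable P" using sP by (simp add: measurable_def spP)
    moreover have "\<forall>x\<in>space P. 0 \<le> h x powr e" by simp
    moreover have "\<forall>x\<in>space P. h x powr e \<le> (B powr \<beta>) powr e"
      using h0 hB e0 spP by (auto intro!: powr_mono2)
    ultimately show ?thesis using b1 unfolding bnd_def e_def \<beta>_def by blast
  qed
  also have "(\<integral>x. (h x powr e) powr \<beta> \<partial>Q) = (\<integral>x. h x \<partial>Q)"
    using h0 spQ by (intro Bochner_Integration.integral_cong) (auto simp: powr_powr eb)
  also have "\<dots> = (\<integral>y. f y powr \<beta> \<partial>(Q \<bind> K'))"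
    unfolding h_def
  proof (rule integral_bind_bounded[OF K' Q sQ fbm, symmetric])
    show "0 \<le> f y powr \<beta>" for y by simp
    show "f y powr \<beta> \<le> B powr \<beta>" if "y \<in> space N" for y
      using f0[OF that] fB[OF that] b0 by (intro powr_mono2) auto
  qed
  finally have "(\<integral>y. f y \<partial>(P \<bind> K)) \<le> c2 * (c1 * (\<integral>y. f y powr \<beta> \<partial>(Q \<bind> K')) powr e)"
    using c2 by (simp add: mult_left_mono)
  then show "(\<integral>y. f y \<partial>(P \<bind> K)) \<le> c1 * c2 * (\<integral>y. f y powr (\<alpha>/(\<alpha>-1)) \<partial>(Q \<bind> K')) powr ((\<alpha>-1)/\<alpha>)"
    unfolding e_def \<beta>_def by (simp add: ac_simps)
qed

lemma bnd_return:
  assumes "x \<in> space N" "\<alpha> > 1"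
  shows "bnd \<alpha> (return N x) (return N x) 1"
  unfolding bnd_def
proof (intro allI impI)
  fix f :: "_ \<Rightarrow> real"
  assume "f \<in> borel_measurable (return N x)" "\<forall>y\<in>space (return N x). 0 \<le> f y"
  then have fm: "f \<in> borel_measurable N" and f0: "0 \<le> f x" using assms by (auto simp: measurable_def)
  have "(f x powr (\<alpha>/(\<alpha>-1))) powr ((\<alpha>-1)/\<alpha>) = f x"
    using f0 assms by (simp add: powr_powr)
  then show "(\<integral>y. f y \<partial>return N x) \<le> 1 * (\<integral>y. f y powr (\<alpha>/(\<alpha>-1)) \<partial>return N x) powr ((\<alpha>-1)/\<alpha>)"
    using assms fm by (simp add: integral_return)
qed



definition gdens :: "real \<Rightarrow> 'a::euclidean_space \<Rightarrow> 'a \<Rightarrow> real" where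
  "gdens s m x = (\<Prod>b\<in>Basis. normal_density (m \<bullet> b) s (x \<bullet> b))"

lemma gdens_pos: "s > 0 \<Longrightarrow> gdens s m x > 0"
  unfolding gdens_def by (intro prod_pos normal_density_pos)

lemma gdens_measurable[measurable]: "gdens s m \<in> borel_measurable borel"
  unfolding gdens_def by measurable

lemma nn_integral_normal_density1: "s > 0 \<Longrightarrow> (\<integral>\<^sup>+x. ennreal (normal_density \<mu> s x) \<partial>lborel) = 1"
  by (subst nn_integral_eq_integral) auto

lemma gdens_integral: "s > 0 \<Longrightarrow> (\<integral>\<^sup>+x. ennreal (gdens s m x) \<partial>lborel) = 1"
proof -
  assume s: "s > 0"
  have "(\<integral>\<^sup>+x. ennreal (gdens s m x) \<partial>lborel) =
        (\<integral>\<^sup>+x. (\<Prod>b\<in>Basis. ennreal (normal_density (m \<bullet> b) s (x \<bullet> b))) \<partial>lborel)"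
    unfolding gdens_def by (subst prod_ennreal) auto
  also have "\<dots> = (\<Prod>b\<in>Basis. (\<integral>\<^sup>+x. ennreal (normal_density (m \<bullet> b) s x) \<partial>lborel))"
    by (rule nn_integral_lborel_prod) auto
  also have "\<dots> = 1" using s by (simp add: nn_integral_normal_density1)
  finally show ?thesis .
qed

lemma gdens_prob: "s > 0 \<Longrightarrow> prob_space (density lborel (\<lambda>x. ennreal (gdens s m x)))"
  by (rule prob_spaceI) (simp add: emeasure_density gdens_integral)

lemma normal_density_ratio:
  assumes s: "s > 0"
  shows "normal_density d s t * (normal_density 0 s t / normal_density d s t) powr \<alpha> =
         exp (\<alpha> * (\<alpha> - 1) * d\<^sup>2 / (2 * s\<^sup>2)) * normal_density ((1 - \<alpha>) * d) s t"
proof -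
  define C where "C = 1 / sqrt (2 * pi * s\<^sup>2)"
  have C: "C > 0" unfolding C_def using s by simp
  have r: "normal_density 0 s t / normal_density d s t = exp (((t - d)\<^sup>2 - t\<^sup>2) / (2 * s\<^sup>2))"
    unfolding normal_density_def C_def[symmetric] using C
    by (simp add: exp_diff[symmetric] diff_divide_distrib)
  have "normal_density d s t * (normal_density 0 s t / normal_density d s t) powr \<alpha> =
        normal_density d s t * exp (\<alpha> * (((t - d)\<^sup>2 - t\<^sup>2) / (2 * s\<^sup>2)))"
    unfolding r by (simp add: powr_def)
  also have "\<dots> = C * exp (-(t - d)\<^sup>2 / (2 * s\<^sup>2) + \<alpha> * (((t - d)\<^sup>2 - t\<^sup>2) / (2 * s\<^sup>2)))"
    unfolding normal_density_def C_def[symmetric] by (simp add: exp_add[symmetric] algebra_simps)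
  also have "-(t - d)\<^sup>2 / (2 * s\<^sup>2) + \<alpha> * (((t - d)\<^sup>2 - t\<^sup>2) / (2 * s\<^sup>2)) =
             \<alpha> * (\<alpha> - 1) * d\<^sup>2 / (2 * s\<^sup>2) + (-(t - (1 - \<alpha>) * d)\<^sup>2 / (2 * s\<^sup>2))"
    using s by (simp add: field_simps power2_eq_square)
  also have "C * exp \<dots> = exp (\<alpha> * (\<alpha> - 1) * d\<^sup>2 / (2 * s\<^sup>2)) * normal_density ((1 - \<alpha>) * d) s t"
    unfolding normal_density_def C_def[symmetric] by (simp add: exp_add[symmetric])
  finally show ?thesis .
qed



lemma gdens_shift: "gdens s \<delta> (\<delta> + x) = gdens s 0 x"
  unfolding gdens_def normal_density_def by (simp add: inner_add_left)

lemma gauss_distr_shift: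
  fixes \<delta> :: "'a::euclidean_space"
  shows "distr (density lborel (\<lambda>x. ennreal (gdens s 0 x))) borel (\<lambda>x. x + \<delta>) = density lborel (\<lambda>x. ennreal (gdens s \<delta> x))"
proof (rule measure_eqI)
  show "sets (distr (density lborel (\<lambda>x. ennreal (gdens s 0 x))) borel (\<lambda>x. x + \<delta>)) = sets (density lborel (\<lambda>x. ennreal (gdens s \<delta> x)))"
    by simp
  fix A assume "A \<in> sets (distr (density lborel (\<lambda>x. ennreal (gdens s 0 x))) borel (\<lambda>x. x + \<delta>))"
  then have A[measurable]: "A \<in> sets borel" by simp
  have "emeasure (distr (density lborel (\<lambda>x. ennreal (gdens s 0 x))) borel (\<lambda>x. x + \<delta>)) A =
        (\<integral>\<^sup>+x. ennreal (gdens s 0 x) * indicator A (x + \<delta>) \<partial>lborel)"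
  proof -
    have hm: "(\<lambda>x::'a. x + \<delta>) \<in> borel_measurable borel" by simp
    have pre: "(\<lambda>x. x + \<delta>) -` A \<in> sets lborel" using measurable_sets[OF hm A] by simp
    have "emeasure (distr (density lborel (\<lambda>x. ennreal (gdens s 0 x))) borel (\<lambda>x. x + \<delta>)) A
       = emeasure (density lborel (\<lambda>x. ennreal (gdens s 0 x))) ((\<lambda>x. x + \<delta>) -` A)"
      by (subst emeasure_distr) auto
    also have "\<dots> = (\<integral>\<^sup>+x. ennreal (gdens s 0 x) * indicator ((\<lambda>x. x + \<delta>) -` A) x \<partial>lborel)"
      by (rule emeasure_density[OF _ pre]) simp
    also have "\<dots> = (\<integral>\<^sup>+x. ennreal (gdens s 0 x) * indicator A (x + \<delta>) \<partial>lborel)"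
      by (intro nn_integral_cong) (simp split: split_indicator)
    finally show ?thesis .
  qed
  also have "\<dots> = (\<integral>\<^sup>+x. ennreal (gdens s \<delta> (\<delta> + x)) * indicator A (\<delta> + x) \<partial>lborel)"
    using gdens_shift[of s \<delta>] by (simp add: add.commute)
  also have "\<dots> = (\<integral>\<^sup>+y. ennreal (gdens s \<delta> y) * indicator A y \<partial>distr lborel borel ((+) \<delta>))"
    by (subst nn_integral_distr) auto
  also have "\<dots> = (\<integral>\<^sup>+y. ennreal (gdens s \<delta> y) * indicator A y \<partial>lborel)"
    by (simp add: lborel_distr_plus)
  also have "\<dots> = emeasure (density lborel (\<lambda>x. ennreal (gdens s \<delta> x))) A"
    by (simp add: emeasure_density)
  finally show "emeasure (distr (density lborel (\<lambda>x. ennreal (gdens s 0 x))) borel (\<lambda>x. x + \<delta>)) A =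
      emeasure (density lborel (\<lambda>x. ennreal (gdens s \<delta> x))) A" .
qed

lemma gdens_ratio:
  fixes \<delta> x :: "'a::euclidean_space"
  assumes s: "s > 0"
  shows "gdens s \<delta> x * (gdens s 0 x / gdens s \<delta> x) powr \<alpha> =
         exp (\<alpha> * (\<alpha> - 1) * (\<delta> \<bullet> \<delta>) / (2 * s\<^sup>2)) * gdens s ((1 - \<alpha>) *\<^sub>R \<delta>) x"
proof -
  have "gdens s \<delta> x * (gdens s 0 x / gdens s \<delta> x) powr \<alpha> =
       (\<Prod>b\<in>Basis. normal_density (\<delta> \<bullet> b) s (x \<bullet> b) *
          (normal_density 0 s (x \<bullet> b) / normal_density (\<delta> \<bullet> b) s (x \<bullet> b)) powr \<alpha>)"
    unfolding gdens_def by (simp add: prod_dividef[symmetric] prod_powr_distrib prod.distrib)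
  also have "\<dots> = (\<Prod>b\<in>Basis. exp (\<alpha> * (\<alpha> - 1) * (\<delta> \<bullet> b)\<^sup>2 / (2 * s\<^sup>2)) *
                     normal_density ((1 - \<alpha>) * (\<delta> \<bullet> b)) s (x \<bullet> b))"
    using s by (simp add: normal_density_ratio)
  also have "\<dots> = exp (\<Sum>b\<in>Basis. \<alpha> * (\<alpha> - 1) * (\<delta> \<bullet> b)\<^sup>2 / (2 * s\<^sup>2)) * gdens s ((1 - \<alpha>) *\<^sub>R \<delta>) x"
    unfolding gdens_def by (simp add: prod.distrib exp_sum)
  also have "(\<Sum>b\<in>Basis. \<alpha> * (\<alpha> - 1) * (\<delta> \<bullet> b)\<^sup>2 / (2 * s\<^sup>2)) = \<alpha> * (\<alpha> - 1) * (\<delta> \<bullet> \<delta>) / (2 * s\<^sup>2)"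
    by (simp add: sum_divide_distrib[symmetric] sum_distrib_left[symmetric] euclidean_inner[of \<delta> \<delta>] power2_eq_square)
  finally show ?thesis .
qed

lemma bnd_gauss:
  fixes \<delta> :: "'a::euclidean_space"
  assumes a: "\<alpha> > 1" and s: "s > 0"
  shows "bnd \<alpha> (density lborel (\<lambda>x. ennreal (gdens s 0 x))) (density lborel (\<lambda>x. ennreal (gdens s \<delta> x)))
           (exp ((\<alpha> - 1) * (\<delta> \<bullet> \<delta>) / (2 * s\<^sup>2)))"
proof -
  define Q where "Q = density lborel (\<lambda>x. ennreal (gdens s \<delta> x))"
  define q where "q x = gdens s 0 x / gdens s \<delta> x" for x
  define E where "E = exp (\<alpha> * (\<alpha> - 1) * (\<delta> \<bullet> \<delta>) / (2 * s\<^sup>2))"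
  have Q: "prob_space Q" unfolding Q_def using s by (rule gdens_prob)
  have qm[measurable]: "q \<in> borel_measurable Q" unfolding q_def Q_def by measurable
  have qmb[measurable]: "q \<in> borel_measurable borel" unfolding q_def by measurable
  have q0: "\<And>x. 0 \<le> q x" unfolding q_def using gdens_pos[OF s] by (auto intro: divide_nonneg_pos less_imp_le)
  have P: "density lborel (\<lambda>x. ennreal (gdens s 0 x)) = density Q (\<lambda>x. ennreal (q x))"
    unfolding Q_def
    by (subst density_density_eq) (auto simp: q_def gdens_pos[OF s] less_imp_le ennreal_mult''[symmetric] intro!: density_cong AE_I2 simp: gdens_pos[OF s, THEN less_imp_neq, symmetric])
  have pt: "gdens s \<delta> x * q x powr \<alpha> = E * gdens s ((1 - \<alpha>) *\<^sub>R \<delta>) x" for x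
    unfolding q_def E_def by (rule gdens_ratio[OF s])
  have ig: "integrable lborel (gdens s m)" for m :: 'a
    using gdens_integral[OF s, of m] gdens_pos[OF s, of m]
    by (intro integrableI_nonneg) (auto intro!: AE_I2 less_imp_le)
  have intg: "(\<integral>x. gdens s m x \<partial>lborel) = 1" for m :: 'a
    using gdens_integral[OF s, of m] gdens_pos[OF s, of m]
    by (subst integral_eq_nn_integral) (auto intro!: AE_I2 less_imp_le)
  have iq: "integrable Q (\<lambda>x. q x powr \<alpha>)"
    unfolding Q_def using gdens_pos[OF s] ig[of "(1 - \<alpha>) *\<^sub>R \<delta>"]
    by (subst integrable_density) (auto simp: pt intro!: AE_I2 less_imp_le)
  have "(\<integral>x. q x powr \<alpha> \<partial>Q) = (\<integral>x. E * gdens s ((1 - \<alpha>) *\<^sub>R \<delta>) x \<partial>lborel)"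
    unfolding Q_def using gdens_pos[OF s] by (subst integral_density) (auto simp: pt intro!: AE_I2 less_imp_le)
  also have "\<dots> = E" by (simp add: intg)
  finally have iv: "(\<integral>x. q x powr \<alpha> \<partial>Q) = E" .
  have "E powr (1/\<alpha>) = exp ((\<alpha> - 1) * (\<delta> \<bullet> \<delta>) / (2 * s\<^sup>2))"
  proof -
    have "1 / \<alpha> * (\<alpha> * (\<alpha> - 1) * (\<delta> \<bullet> \<delta>) / (2 * s\<^sup>2)) = (\<alpha> - 1) * (\<delta> \<bullet> \<delta>) / (2 * s\<^sup>2)"
      using a by simp
    then show ?thesis unfolding E_def by (simp add: powr_def)
  qed
  then show ?thesis
    using bnd_density[OF a Q qm q0 P iq] iv unfolding Q_def by simp
qed



lemma Basis_vec2: "(Basis :: (real^'h::finite^'n::finite) set) = (\<lambda>(i,k). axis i (axis k 1)) ` (UNIV \<times> UNIV)"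
  unfolding Basis_vec_def by auto

lemma inj_axis2: "inj_on (\<lambda>(i,k). (axis i (axis k 1) :: real^'h::finite^'n::finite)) (UNIV \<times> UNIV)"
  by (auto simp: inj_on_def axis_eq_axis)

lemma prod_Basis_vec2:
  fixes F :: "real \<Rightarrow> 'b::comm_monoid_mult" and N :: "real^'h::finite^'n::finite"
  shows "(\<Prod>b\<in>Basis. F (N \<bullet> b)) = (\<Prod>i\<in>UNIV. \<Prod>k\<in>UNIV. F (N $ i $ k))"
proof -
  have "(\<Prod>b\<in>Basis. F (N \<bullet> b)) = (\<Prod>p\<in>UNIV \<times> UNIV. F (N \<bullet> (case p of (i,k) \<Rightarrow> axis i (axis k 1))))"
    unfolding Basis_vec2 by (subst prod.reindex[OF inj_axis2]) (simp add: comp_def)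
  also have "\<dots> = (\<Prod>p\<in>UNIV \<times> UNIV. F (N $ fst p $ snd p))"
    by (intro prod.cong) (auto simp: inner_axis)
  also have "\<dots> = (\<Prod>i\<in>UNIV. \<Prod>k\<in>UNIV. F (N $ i $ k))"
    unfolding prod.cartesian_product by (simp add: case_prod_beta)
  finally show ?thesis .
qed

lemma gauss_noise_eq: "gauss_noise s = density lborel (\<lambda>x. ennreal (gdens s (0::real^'h::finite^'n::finite) x))"
proof -
  have "(\<Prod>i\<in>UNIV. \<Prod>k\<in>UNIV. ennreal (normal_density 0 s (x $ i $ k))) = ennreal (gdens s 0 x)" for x :: "real^'h^'n"
    unfolding gdens_def by (simp add: prod_Basis_vec2 prod_ennreal prod_nonneg)
  then show ?thesis unfolding gauss_noise_def by simp
qed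

lemma Zmat_cont: "continuous_on UNIV (\<lambda>p::((real^'h::finite^'n::finite) \<times> (real^'h)) \<times> (real^'h^'n). Zmat A (fst (fst p)) (snd (fst p)) (snd p))"
  unfolding Zmat_def by (intro continuous_intros)

lemma Zmat_measurable[measurable (raw)]:
  fixes A :: "'n::finite \<Rightarrow> 'n \<Rightarrow> bool"
  assumes "f \<in> M \<rightarrow>\<^sub>M borel" "g \<in> M \<rightarrow>\<^sub>M borel" "h \<in> M \<rightarrow>\<^sub>M borel"
  shows "(\<lambda>x. Zmat A (f x) (g x) (h x)) \<in> M \<rightarrow>\<^sub>M borel"
proof -
  have c: "(\<lambda>p::((real^'h::finite^'n::finite) \<times> (real^'h)) \<times> (real^'h^'n). Zmat A (fst (fst p)) (snd (fst p)) (snd p)) \<in> borel \<rightarrow>\<^sub>M borel"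
    by (rule borel_measurable_continuous_onI[OF Zmat_cont])
  have "(\<lambda>x. ((f x, g x), h x)) \<in> M \<rightarrow>\<^sub>M borel"
    using assms by (subst borel_prod[symmetric], intro measurable_Pair, subst borel_prod[symmetric], intro measurable_Pair) auto
  from measurable_compose[OF this c] show ?thesis by simp
qed

lemma Zmat_add: "Zmat A W b N = Zmat A W b 0 + N"
  unfolding Zmat_def by (simp add: vec_eq_iff)



lemma vec_nth_measurable[measurable (raw)]:
  fixes f :: "'a \<Rightarrow> 'b::real_normed_vector^'n::finite"
  assumes "f \<in> M \<rightarrow>\<^sub>M borel"
  shows "(\<lambda>x. f x $ i) \<in> M \<rightarrow>\<^sub>M borel"
proof -
  have "(\<lambda>y::'b^'n. y $ i) \<in> borel \<rightarrow>\<^sub>M borel"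
    by (rule borel_measurable_continuous_onI) (intro continuous_intros)
  from measurable_compose[OF assms this] show ?thesis .
qed

lemma sum_split_r: "finite S \<Longrightarrow> sum f S = sum f (S - {r}) + (if r \<in> S then f r else 0)"
  by (simp add: sum.remove add.commute)

lemma delta_bound:
  fixes A A' :: "'n::finite \<Rightarrow> 'n \<Rightarrow> bool" and W :: "real^'h::finite^'n" and b :: "real^'h"
  assumes eqA: "\<forall>i j. i \<noteq> r \<and> j \<noteq> r \<longrightarrow> A i j = A' i j" and nW: "norm (W $ r) = 1"
  defines "\<delta> \<equiv> (\<chi> i. if i = r then 0 else (Zmat A' W b 0 - Zmat A W b 0) $ i)"
  shows "\<delta> \<bullet> \<delta> \<le> real (out_degree A r) + real (out_degree A' r)"
proof -
  have tm: "\<delta> $ i \<bullet> \<delta> $ i \<le> of_bool (A i r) + of_bool (A' i r)" for i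
  proof (cases "i = r")
    case True then show ?thesis by (simp add: \<delta>_def)
  next
    case False
    have S: "{j. A' i j} - {r} = {j. A i j} - {r}" using eqA False by auto
    have "\<delta> $ i = (\<Sum>j\<in>{j. A' i j}. W $ j) - (\<Sum>j\<in>{j. A i j}. W $ j)"
      using False by (simp add: \<delta>_def Zmat_def)
    also have "\<dots> = (if A' i r then W $ r else 0) - (if A i r then W $ r else 0)"
      by (subst (1 2) sum_split_r[where r=r]) (auto simp: S)
    finally have d: "\<delta> $ i = (if A' i r then W $ r else 0) - (if A i r then W $ r else 0)" .
    have ww: "W $ r \<bullet> W $ r = 1" using nW by (simp add: dot_square_norm)
    show ?thesis unfolding d using ww by (cases "A i r"; cases "A' i r") auto
  qed
  have "\<delta> \<bullet> \<delta> = (\<Sum>i\<in>UNIV. \<delta> $ i \<bullet> \<delta> $ i)" by (simp add: inner_vec_def)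
  also have "\<dots> \<le> (\<Sum>i\<in>UNIV. of_bool (A i r) + of_bool (A' i r))"
    by (intro sum_mono tm)
  also have "\<dots> = real (out_degree A r) + real (out_degree A' r)"
    by (simp add: sum.distrib out_degree_def)
  finally show ?thesis .
qed



theorem corollaryH2:
  fixes WA :: "('f::finite, 'n::finite, 'c) dataset \<Rightarrow> ((real^'h::finite^'n) \<times> (real^'h)) measure"
    and B :: "real^'f^'n \<Rightarrow> ('n \<Rightarrow> 'c option) \<Rightarrow> real^'h^'n \<Rightarrow> 'p measure"
    and P :: "'p measure"
    and g :: "'p \<Rightarrow> real^'f \<Rightarrow> real^'h \<Rightarrow> 'y"
    and Yo :: "'y measure"
    and L :: "'n set"
    and \<alpha> s Dg \<gamma>1 \<gamma>2 :: real
  assumes alpha: "\<alpha> > 1" and s: "s > 0" and Dg: "Dg \<ge> 1"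
    and WA_prob: "\<And>D. dataset_wf L D \<Longrightarrow> prob_space (WA D)"
    and WA_sets: "\<And>D. dataset_wf L D \<Longrightarrow> sets (WA D) = sets borel"
    and WA_rows: "\<And>D. dataset_wf L D \<Longrightarrow> AE wb in WA D. \<forall>i. norm (fst wb $ i) = 1"
    and B_kernel: "\<And>X Y. labels_wf L Y \<Longrightarrow> B X Y \<in> borel \<rightarrow>\<^sub>M prob_algebra P"
    and g_meas: "(\<lambda>(\<theta>, x, z). g \<theta> x z) \<in> P \<Otimes>\<^sub>M (borel \<Otimes>\<^sub>M borel) \<rightarrow>\<^sub>M Yo"
    and WA_rdp: "\<And>D D' r. node_adjacent L D D' r \<Longrightarrow> deg_bounded Dg D \<Longrightarrow> deg_bounded Dg D' \<Longrightarrow>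
                   renyi_div \<alpha> (WA D) (WA D') \<le> ereal \<gamma>1"
    and B_rdp: "\<And>X Y Z X' Y' Z' r. labels_wf L Y \<Longrightarrow> labels_wf L Y' \<Longrightarrow>
                   (\<forall>i. i \<noteq> r \<longrightarrow> X $ i = X' $ i \<and> Y i = Y' i \<and> Z $ i = Z' $ i) \<Longrightarrow>
                   renyi_div \<alpha> (B X Y Z) (B X' Y' Z') \<le> ereal \<gamma>2"
  shows "\<forall>v D D' r. v \<notin> L \<and> node_adjacent L D D' r \<and> r \<noteq> v \<and>
            deg_bounded Dg D \<and> deg_bounded Dg D' \<longrightarrow>
            renyi_div \<alpha> (dpdgc_mech WA s B P g Yo v D) (dpdgc_mech WA s B P g Yo v D')
              \<le> ereal (\<gamma>1 + \<gamma>2 + 2 * Dg * \<alpha> / (2 * s\<^sup>2))"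
proof (intro allI impI)
  fix v r :: 'n and D D' :: "('f, 'n, 'c) dataset"
  assume H: "v \<notin> L \<and> node_adjacent L D D' r \<and> r \<noteq> v \<and> deg_bounded Dg D \<and> deg_bounded Dg D'"
  obtain X Y A where D: "D = (X, Y, A)" by (cases D) auto
  obtain X' Y' A' where D': "D' = (X', Y', A')" by (cases D') auto
  have adj: "node_adjacent L D D' r" and vr: "r \<noteq> v" and dbD: "deg_bounded Dg D" and dbD': "deg_bounded Dg D'"
    using H by auto
  have wfD: "dataset_wf L D" and wfD': "dataset_wf L D'"
    and eqX: "\<forall>i. i \<noteq> r \<longrightarrow> X $ i = X' $ i" and eqY: "\<forall>i. i \<noteq> r \<longrightarrow> Y i = Y' i"
    and eqA: "\<forall>i j. i \<noteq> r \<and> j \<noteq> r \<longrightarrow> A i j = A' i j"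
    using adj unfolding node_adjacent_def D D' by auto
  have lY: "labels_wf L Y" and lY': "labels_wf L Y'" using wfD wfD' unfolding dataset_wf_def D D' by auto
  have degA: "real (out_degree A r) \<le> Dg" and degA': "real (out_degree A' r) \<le> Dg"
    using dbD dbD' unfolding deg_bounded_def D D' by auto
  have BK[measurable]: "B X Y \<in> borel \<rightarrow>\<^sub>M prob_algebra P" "B X' Y' \<in> borel \<rightarrow>\<^sub>M prob_algebra P"
    using B_kernel lY lY' by auto
  define M0 where "M0 = (borel \<Otimes>\<^sub>M borel :: ((real^'h^'n) \<times> (real^'h)) measure)"
  have M0b: "M0 = borel" unfolding M0_def by (rule borel_prod)
  define Out where "Out = Yo \<Otimes>\<^sub>M (M0 \<Otimes>\<^sub>M P)"
  define xv where "xv = X $ v"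
  have xv': "X' $ v = xv" using eqX vr unfolding xv_def by auto
  have gm[measurable (raw)]: "(\<lambda>x. g (t x) (u x) (z x)) \<in> M \<rightarrow>\<^sub>M Yo"
    if [measurable]: "t \<in> M \<rightarrow>\<^sub>M P" "u \<in> M \<rightarrow>\<^sub>M borel" "z \<in> M \<rightarrow>\<^sub>M borel" for t u z and M :: "'q measure"
  proof -
    have "(\<lambda>x. (t x, u x, z x)) \<in> M \<rightarrow>\<^sub>M P \<Otimes>\<^sub>M (borel \<Otimes>\<^sub>M borel)" by measurable
    from measurable_compose[OF this g_meas] show ?thesis by simp
  qed
  define noise where "noise = (gauss_noise s :: (real^'h^'n) measure)"
  have nz: "noise = density lborel (\<lambda>x. ennreal (gdens s 0 x))"
    unfolding noise_def by (rule gauss_noise_eq)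
  have nprob: "prob_space noise" unfolding nz using s by (rule gdens_prob)
  have nsets: "sets noise = sets borel" unfolding nz by simp
  have nspace: "noise \<in> space (prob_algebra borel)" using nprob nsets by (simp add: space_prob_algebra)
  define KD where "KD w = noise \<bind> (\<lambda>N. B X Y (Zmat A (fst w) (snd w) N) \<bind>
      (\<lambda>\<theta>. return Out (g \<theta> xv (Zmat A (fst w) (snd w) N $ v), (w, \<theta>))))" for w
  define KD' where "KD' w = noise \<bind> (\<lambda>N. B X' Y' (Zmat A' (fst w) (snd w) N) \<bind>
      (\<lambda>\<theta>. return Out (g \<theta> xv (Zmat A' (fst w) (snd w) N $ v), (w, \<theta>))))" for w
  have mech: "dpdgc_mech WA s B P g Yo v D = WA D \<bind> KD"
    unfolding dpdgc_mech_def D KD_def noise_def Out_def xv_def M0b by (simp add: case_prod_unfold Let_def)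
  have mech': "dpdgc_mech WA s B P g Yo v D' = WA D' \<bind> KD'"
    unfolding dpdgc_mech_def D' KD'_def noise_def Out_def xv'[symmetric] M0b by (simp add: case_prod_unfold Let_def)
  have RM: "(\<lambda>(p, \<theta>). return Out (g \<theta> xv (Zmat A1 (fst (fst p)) (snd (fst p)) (snd p) $ v), (fst p, \<theta>)))
      \<in> (M0 \<Otimes>\<^sub>M (borel :: (real^'h^'n) measure)) \<Otimes>\<^sub>M P \<rightarrow>\<^sub>M prob_algebra Out" for A1
    unfolding Out_def M0_def by measurable
  have nconst[measurable]: "(\<lambda>x. noise) \<in> M \<rightarrow>\<^sub>M prob_algebra borel" for M :: "'q measure"
    using nspace by (rule measurable_const)
  have KDm: "KD \<in> M0 \<rightarrow>\<^sub>M prob_algebra Out"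
    unfolding KD_def[abs_def] Out_def M0_def by measurable
  have KD'm: "KD' \<in> M0 \<rightarrow>\<^sub>M prob_algebra Out"
    unfolding KD'_def[abs_def] Out_def M0_def by measurable
  define cW where "cW = exp (\<gamma>1 * (\<alpha>-1) / \<alpha>)"
  define cB where "cB = exp (\<gamma>2 * (\<alpha>-1) / \<alpha>)"
  define cG where "cG = exp ((\<alpha> - 1) * (2 * Dg) / (2 * s\<^sup>2))"
  have WAs: "sets (WA D) = sets M0" "sets (WA D') = sets M0" using WA_sets[OF wfD] WA_sets[OF wfD'] M0b by auto
  have bW: "bnd \<alpha> (WA D) (WA D') cW"
    unfolding cW_def using WAs
    by (intro bnd_of_renyi[OF alpha WA_prob[OF wfD] WA_prob[OF wfD'] _ WA_rdp[OF adj dbD dbD']]) simp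
  have inner: "bnd \<alpha> (KD w) (KD' w) (cG * cB)" if nw: "\<forall>i. norm (fst w $ i) = 1" for w
  proof -
    define W where "W = fst w"
    define bb where "bb = snd w"
    define \<delta> where "\<delta> = (\<chi> i. if i = r then 0 else (Zmat A' W bb 0 - Zmat A W bb 0) $ i)"
    define F where "F N = B X Y (Zmat A W bb N) \<bind> (\<lambda>\<theta>. return Out (g \<theta> xv (Zmat A W bb N $ v), (w, \<theta>)))" for N
    define F' where "F' N = B X' Y' (Zmat A' W bb (N - \<delta>)) \<bind> (\<lambda>\<theta>. return Out (g \<theta> xv (Zmat A' W bb (N - \<delta>) $ v), (w, \<theta>)))" for N
    have KDw: "KD w = noise \<bind> F" unfolding KD_def F_def W_def bb_def ..
    have Fm: "F \<in> borel \<rightarrow>\<^sub>M prob_algebra Out" unfolding F_def[abs_def] Out_def M0_def by measurable (simp_all add: space_pair_measure)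
    have F'm: "F' \<in> borel \<rightarrow>\<^sub>M prob_algebra Out" unfolding F'_def[abs_def] Out_def M0_def by measurable (simp_all add: space_pair_measure)
    have KD'w: "KD' w = distr noise borel (\<lambda>N. N + \<delta>) \<bind> F'"
    proof -
      have "distr noise borel (\<lambda>N. N + \<delta>) \<bind> F' = noise \<bind> (\<lambda>N. F' (N + \<delta>))"
        by (rule bind_distr[OF _ measurable_prob_algebraD[OF F'm]])
           (use nsets prob_space.not_empty[OF nprob] in \<open>simp_all add: measurable_def\<close>)
      also have "\<dots> = KD' w" unfolding KD'_def F'_def W_def bb_def by simp
      finally show ?thesis by simp
    qed
    have shift: "distr noise borel (\<lambda>N. N + \<delta>) = density lborel (\<lambda>x. ennreal (gdens s \<delta> x))"
      unfolding nz by (rule gauss_distr_shift)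
    have dd: "\<delta> \<bullet> \<delta> \<le> 2 * Dg"
    proof -
      have "norm (W $ r) = 1" using nw unfolding W_def by simp
      from delta_bound[OF eqA this, of bb] have "\<delta> \<bullet> \<delta> \<le> real (out_degree A r) + real (out_degree A' r)"
        unfolding \<delta>_def by simp
      then show ?thesis using degA degA' by simp
    qed
    have bG: "bnd \<alpha> noise (distr noise borel (\<lambda>N. N + \<delta>)) cG"
    proof (rule bnd_mono)
      show "bnd \<alpha> noise (distr noise borel (\<lambda>N. N + \<delta>)) (exp ((\<alpha> - 1) * (\<delta> \<bullet> \<delta>) / (2 * s\<^sup>2)))"
        unfolding shift unfolding nz by (rule bnd_gauss[OF alpha s])
      show "exp ((\<alpha> - 1) * (\<delta> \<bullet> \<delta>) / (2 * s\<^sup>2)) \<le> cG"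
      proof -
        have "(\<alpha> - 1) * (\<delta> \<bullet> \<delta>) \<le> (\<alpha> - 1) * (2 * Dg)" using dd alpha by (intro mult_left_mono) auto
        then have "(\<alpha> - 1) * (\<delta> \<bullet> \<delta>) / (2 * s\<^sup>2) \<le> (\<alpha> - 1) * (2 * Dg) / (2 * s\<^sup>2)"
          using s by (intro divide_right_mono) auto
        then show ?thesis unfolding cG_def by simp
      qed
    qed
    have bF: "bnd \<alpha> (F N) (F' N) cB" for N
    proof -
      define Z1 where "Z1 = Zmat A W bb N"
      define Z2 where "Z2 = Zmat A' W bb (N - \<delta>)"
      have Zeq: "\<forall>i. i \<noteq> r \<longrightarrow> Z1 $ i = Z2 $ i"
        unfolding Z1_def Z2_def by (subst (1 2) Zmat_add) (simp add: \<delta>_def)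
      have Zv: "Z2 $ v = Z1 $ v" using Zeq vr by auto
      define R where "R \<theta> = return Out (g \<theta> xv (Z1 $ v), (w, \<theta>))" for \<theta>
      have F1: "F N = B X Y Z1 \<bind> R" unfolding F_def R_def Z1_def ..
      have F2: "F' N = B X' Y' Z2 \<bind> R" unfolding F'_def R_def Z2_def[symmetric] Zv ..
      have Rm: "R \<in> P \<rightarrow>\<^sub>M prob_algebra Out" unfolding R_def[abs_def] Out_def M0_def by measurable (simp_all add: space_pair_measure)
      have k1: "prob_space (B X Y Z1)" "sets (B X Y Z1) = sets P" using kernel_facts[OF BK(1), of Z1] by auto
      have k2: "prob_space (B X' Y' Z2)" "sets (B X' Y' Z2) = sets P" using kernel_facts[OF BK(2), of Z2] by auto
      have bR: "bnd \<alpha> (B X Y Z1) (B X' Y' Z2) cB"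
        unfolding cB_def
      proof (rule bnd_of_renyi[OF alpha k1(1) k2(1)])
        show "sets (B X Y Z1) = sets (B X' Y' Z2)" using k1 k2 by simp
        show "renyi_div \<alpha> (B X Y Z1) (B X' Y' Z2) \<le> ereal \<gamma>2"
          by (rule B_rdp[OF lY lY']) (use eqX eqY Zeq in blast)
      qed
      have ret: "bnd \<alpha> (R \<theta>) (R \<theta>) 1" if th: "\<theta> \<in> space (B X Y Z1)" for \<theta>
      proof -
        have thP: "\<theta> \<in> space P" using th k1 sets_eq_imp_space_eq by blast
        have "(\<theta>, xv, Z1 $ v) \<in> space (P \<Otimes>\<^sub>M (borel \<Otimes>\<^sub>M borel))" using thP by (simp add: space_pair_measure)
        from measurable_space[OF g_meas this] have "g \<theta> xv (Z1 $ v) \<in> space Yo" by simp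
        then have "(g \<theta> xv (Z1 $ v), (w, \<theta>)) \<in> space Out" using thP
          unfolding Out_def M0_def by (simp add: space_pair_measure)
        then show ?thesis unfolding R_def by (rule bnd_return[OF _ alpha])
      qed
      have "bnd \<alpha> (B X Y Z1 \<bind> R) (B X' Y' Z2 \<bind> R) (cB * 1)"
        by (rule bnd_bind[OF alpha k1(1) k2(1) k1(2) k2(2) Rm Rm bR AE_I2[OF ret]]) (simp_all add: cB_def)
      then show ?thesis unfolding F1 F2 by simp
    qed
    have shp: "prob_space (distr noise borel (\<lambda>N. N + \<delta>))" unfolding shift using s by (rule gdens_prob)
    have "bnd \<alpha> (noise \<bind> F) (distr noise borel (\<lambda>N. N + \<delta>) \<bind> F') (cG * cB)"
      by (rule bnd_bind[OF alpha nprob shp nsets _ Fm F'm bG AE_I2[OF bF]]) (simp_all add: cG_def cB_def)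
    then show ?thesis unfolding KDw KD'w .
  qed
  have b2: "AE w in WA D. bnd \<alpha> (KD w) (KD' w) (cG * cB)"
    using WA_rows[OF wfD] by eventually_elim (rule inner)
  have main: "bnd \<alpha> (WA D \<bind> KD) (WA D' \<bind> KD') (cW * (cG * cB))"
    by (rule bnd_bind[OF alpha WA_prob[OF wfD] WA_prob[OF wfD'] WAs KDm KD'm bW b2])
       (simp_all add: cW_def cG_def cB_def)
  have sp1: "WA D \<in> space (prob_algebra M0)" "WA D' \<in> space (prob_algebra M0)"
    using WAs WA_prob[OF wfD] WA_prob[OF wfD'] by (auto simp: space_prob_algebra)
  have pm: "prob_space (WA D \<bind> KD)" "prob_space (WA D' \<bind> KD')"
    using prob_space_bind'[OF sp1(1) KDm] prob_space_bind'[OF sp1(2) KD'm] by auto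
  have sm: "sets (WA D \<bind> KD) = sets Out" "sets (WA D' \<bind> KD') = sets Out"
    using kernel_facts(2)[OF KDm] kernel_facts(2)[OF KD'm] sets_eq_imp_space_eq[OF WAs(1)]
      sets_eq_imp_space_eq[OF WAs(2)] prob_space.not_empty[OF WA_prob[OF wfD]] prob_space.not_empty[OF WA_prob[OF wfD']]
    by (auto intro!: sets_bind)
  have "renyi_div \<alpha> (WA D \<bind> KD) (WA D' \<bind> KD') \<le> ereal (\<alpha> * ln (cW * (cG * cB)) / (\<alpha>-1))"
    using sm by (intro renyi_of_bnd[OF alpha pm _ main]) (simp_all add: cW_def cG_def cB_def)
  also have "\<alpha> * ln (cW * (cG * cB)) / (\<alpha>-1) = \<gamma>1 + \<gamma>2 + 2 * Dg * \<alpha> / (2 * s\<^sup>2)"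
    using alpha s unfolding cW_def cG_def cB_def by (simp add: ln_mult field_simps)
  finally show "renyi_div \<alpha> (dpdgc_mech WA s B P g Yo v D) (dpdgc_mech WA s B P g Yo v D')
              \<le> ereal (\<gamma>1 + \<gamma>2 + 2 * Dg * \<alpha> / (2 * s\<^sup>2))"
    unfolding mech mech' .
qed

end
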